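(* Let $N\ge1$, let $\mathcal{L}_e$ be a finite index set of size $L_e$, for each $\ell\in\mathcal{L}_e$ let $\mathbf{a}_\ell\in\mathbb{R}^N$, $r_\ell>0$, $x_\ell>0$, and let $L$ be a positive integer. For $\mathbf{b}\in\mathbb{R}^{L_e}$ set $\mathbf{R}^{-1}(\mathbf{b})=\frac12\sum_{\ell}\frac{b_\ell}{r_\ell}\mathbf{a}_\ell\mathbf{a}_\ell^\top$, $\mathbf{X}^{-1}(\mathbf{b})=\frac12\sum_\ell\frac{b_\ell}{x_\ell}\mathbf{a}_\ell\mathbf{a}_\ell^\top$ and, when these are invertible, $$\boldsymbol{\Sigma}(\mathbf{b})=\mathbf{R}(\mathbf{b})\boldsymbol{\Sigma}_p\mathbf{R}(\mathbf{b})+\mathbf{X}(\mathbf{b})\boldsymbol{\Sigma}_q\mathbf{X}(\mathbf{b})+\mathbf{R}(\mathbf{b})\boldsymbol{\Sigma}_{pq}\mathbf{X}(\mathbf{b})+\mathbf{X}(\mathbf{b})\boldsymbol{\Sigma}_{pq}^\top\mathbf{R}(\mathbf{b})+\sigma_n^2\mathbf{I}_N,$$ where $\sigma_n^2\ge0$ and $\boldsymbol{\Sigma}_p,\boldsymbol{\Sigma}_q,\boldsymbol{\Sigma}_{pq}\in\mathbb{R}^{N\times N}$ are such that $\begin{bmatrix}\boldsymbol{\Sigma}_p&\boldsymbol{\Sigma}_{pq}\\ \boldsymbol{\Sigma}_{pq}^\top&\boldsymbol{\Sigma}_q\end{bmatrix}$ is symmetric positive semidefinite (a joint covariance matrix).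 Let $f(\mathbf{b})=\log|\boldsymbol{\Sigma}(\mathbf{b})|+\operatorname{trace}(\boldsymbol{\Sigma}^{-1}(\mathbf{b})\hat{\boldsymbol{\Sigma}})$, defined (finite) at those $\mathbf{b}$ for which $\mathbf{R}(\mathbf{b}),\mathbf{X}(\mathbf{b})$ exist and $\boldsymbol{\Sigma}(\mathbf{b})\succ0$. Let $\mathbf{b}_o\in\{0,1\}^{L_e}$ with $\mathbf{1}^\top\mathbf{b}_o=L$ be such that $f(\mathbf{b}_o)$ is defined (the true line indicator vector), and suppose $\hat{\boldsymbol{\Sigma}}=\boldsymbol{\Sigma}(\mathbf{b}_o)$. Then $\nabla f(\mathbf{b}_o)=\mathbf{0}$, and $\mathbf{b}_o$ is a global minimizer of $f$ both over $\{\mathbf{b}\in\{0,1\}^{L_e}:\mathbf{1}^\top\mathbf{b}=L\}$ and over $\{\mathbf{b}\in[0,1]^{L_e}:\mathbf{1}^\top\mathbf{b}=L\}$ (among the points where $f$ is defined).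
   Context: $|\cdot|$ is the determinant; $\mathbf{1}$ is the all-ones vector. $\mathbf{b}$ is the indicator vector of energized lines among the existing lines $\mathcal{L}_e$ of a distribution grid, $\mathbf{a}_\ell^\top$ are rows of its reduced incidence matrix, and $\hat{\boldsymbol{\Sigma}}$ plays the role of the sample covariance of differential squared-voltage magnitudes, here assumed to have converged to the ensemble covariance. *)

theory Defs
  imports "HOL-Analysis.Analysis"
begin

definition outer :: "real^'n \<Rightarrow> real^'n \<Rightarrow> real^'n^'n" where
  "outer u v = (\<chi> i j. u $ i * v $ j)"

definition mtrace :: "real^'n^'n \<Rightarrow> real" where
  "mtrace M = (\<Sum>i\<in>UNIV. M $ i $ i)"

definition sym_mat :: "real^'m^'m \<Rightarrow> bool" where
  "sym_mat M \<longleftrightarrow> transpose M = M"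

definition psd :: "real^'m^'m \<Rightarrow> bool" where
  "psd M \<longleftrightarrow> sym_mat M \<and> (\<forall>x. 0 \<le> x \<bullet> (M *v x))"

definition pd :: "real^'m^'m \<Rightarrow> bool" where
  "pd M \<longleftrightarrow> sym_mat M \<and> (\<forall>x. x \<noteq> 0 \<longrightarrow> 0 < x \<bullet> (M *v x))"

definition block2 :: "real^'n^'n \<Rightarrow> real^'n^'n \<Rightarrow> real^'n^'n \<Rightarrow> real^'n^'n
    \<Rightarrow> real^('n + 'n)^('n + 'n)" where
  "block2 A B C D = (\<chi> i j. case i of
      Inl i' \<Rightarrow> (case j of Inl j' \<Rightarrow> A $ i' $ j' | Inr j' \<Rightarrow> B $ i' $ j')
    | Inr i' \<Rightarrow> (case j of Inl j' \<Rightarrow> C $ i' $ j' | Inr j' \<Rightarrow> D $ i' $ j'))"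

text \<open>R^{-1}(b) (with c = r) and X^{-1}(b) (with c = x).\<close>
definition invmat :: "('e::finite \<Rightarrow> real^'n) \<Rightarrow> ('e \<Rightarrow> real) \<Rightarrow> real^'e \<Rightarrow> real^'n^'n" where
  "invmat a c b = (1/2) *\<^sub>R (\<Sum>l\<in>UNIV. (b $ l / c l) *\<^sub>R outer (a l) (a l))"

definition Sigma_b :: "('e::finite \<Rightarrow> real^'n) \<Rightarrow> ('e \<Rightarrow> real) \<Rightarrow> ('e \<Rightarrow> real)
    \<Rightarrow> real^'n^'n \<Rightarrow> real^'n^'n \<Rightarrow> real^'n^'n \<Rightarrow> real \<Rightarrow> real^'e \<Rightarrow> real^'n^'n" where
  "Sigma_b a r x Sp Sq Spq sn2 b =
     (let R = matrix_inv (invmat a r b); X = matrix_inv (invmat a x b) in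
       R ** Sp ** R + X ** Sq ** X + R ** Spq ** X + X ** transpose Spq ** R
       + sn2 *\<^sub>R mat 1)"

definition f_defined :: "('e::finite \<Rightarrow> real^'n) \<Rightarrow> ('e \<Rightarrow> real) \<Rightarrow> ('e \<Rightarrow> real)
    \<Rightarrow> real^'n^'n \<Rightarrow> real^'n^'n \<Rightarrow> real^'n^'n \<Rightarrow> real \<Rightarrow> real^'e \<Rightarrow> bool" where
  "f_defined a r x Sp Sq Spq sn2 b \<longleftrightarrow>
     invertible (invmat a r b) \<and> invertible (invmat a x b) \<and> pd (Sigma_b a r x Sp Sq Spq sn2 b)"

definition fobj :: "('e::finite \<Rightarrow> real^'n) \<Rightarrow> ('e \<Rightarrow> real) \<Rightarrow> ('e \<Rightarrow> real)
    \<Rightarrow> real^'n^'n \<Rightarrow> real^'n^'n \<Rightarrow> real^'n^'n \<Rightarrow> real \<Rightarrow> real^'n^'n \<Rightarrow> real^'e \<Rightarrow> real" where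
  "fobj a r x Sp Sq Spq sn2 Shat b =
     (let S = Sigma_b a r x Sp Sq Spq sn2 b in ln (det S) + mtrace (matrix_inv S ** Shat))"

end

theory Submission
  imports Defs
begin


lemma minv_props:
  fixes A :: "real^'n^'n"
  assumes "invertible A"
  shows "A ** matrix_inv A = mat 1 \<and> matrix_inv A ** A = mat 1"
  using assms unfolding invertible_def matrix_inv_def by (rule someI_ex)

lemma minv_unique:
  fixes A B :: "real^'n^'n"
  assumes "B ** A = mat 1"
  shows "matrix_inv A = B"
proof -
  have inv: "invertible A" using assms invertible_left_inverse by blast
  have "A ** B = mat 1" using assms matrix_left_right_inverse by blast
  then have "matrix_inv A = matrix_inv A ** (A ** B)" by simp
  also have "\<dots> = B" using minv_props[OF inv] by (simp add: matrix_mul_assoc)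
  finally show ?thesis .
qed

lemma sym_entry: "sym_mat M \<Longrightarrow> M $ i $ j = M $ j $ i"
  unfolding sym_mat_def by (metis transpose_def vec_lambda_beta)

lemma quad_axis:
  fixes A :: "real^'n^'n"
  shows "axis i 1 \<bullet> (A *v axis i 1) = A $ i $ i"
  by (simp add: inner_vec_def matrix_vector_mult_def axis_def if_distrib if_distribR cong: if_cong)

lemma pd_diag_pos: "pd A \<Longrightarrow> 0 < A $ i $ i"
  unfolding pd_def using quad_axis[of i A]
  by (metis axis_eq_0_iff zero_neq_one)

lemma pd_det_nz:
  fixes A :: "real^'n^'n"
  assumes "pd A" shows "det A \<noteq> 0"
proof
  assume "det A = 0"
  then have "\<not> invertible A" by (simp add: invertible_det_nz)
  then have "\<not> inj ((*v) A)" using invertible_left_inverse matrix_left_invertible_injective by blast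
  then obtain u v where "u \<noteq> v" "A *v u = A *v v" unfolding inj_def by blast
  then have "u - v \<noteq> 0" "A *v (u - v) = 0" by (auto simp: matrix_vector_mult_diff_distrib)
  then show False using assms unfolding pd_def by fastforce
qed

lemma pd_congr:
  fixes B E :: "real^'n^'n"
  assumes "pd B" "det E \<noteq> 0"
  shows "pd (E ** B ** transpose E)"
  unfolding pd_def sym_mat_def
proof (intro conjI allI impI)
  show "transpose (E ** B ** transpose E) = E ** B ** transpose E"
    using assms(1) by (simp add: pd_def sym_mat_def matrix_transpose_mul matrix_mul_assoc)
  fix x :: "real^'n" assume "x \<noteq> 0"
  have "invertible (transpose E)" using assms(2) by (simp add: invertible_det_nz)
  then have "inj ((*v) (transpose E))" by (rule inj_matrix_vector_mult)
  then have y: "transpose E *v x \<noteq> 0" using \<open>x \<noteq> 0\<close>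
    by (metis inj_eq matrix_vector_mult_0_right)
  have "x \<bullet> ((E ** B ** transpose E) *v x) = (transpose E *v x) \<bullet> (B *v (transpose E *v x))"
    by (simp add: matrix_vector_mul_assoc[symmetric] dot_lmul_matrix[symmetric])
  then show "0 < x \<bullet> ((E ** B ** transpose E) *v x)" using assms(1) y unfolding pd_def by simp
qed


definition elimE :: "real^'n^'n \<Rightarrow> 'n \<Rightarrow> real^'n^'n" where
  "elimE B k = (\<chi> i j. (if i = j then 1 else 0) - (if j = k then (if i = k then 0 else B$i$k / B$k$k) else 0))"

lemma elimE_det:
  fixes B :: "real^'n^'n"
  shows "det (elimE B k) = 1"
proof -
  define c where "c i = (if i = k then 0 else B$i$k / B$k$k)" for i
  define x :: "real^'n" where "x = - (\<Sum>j\<in>UNIV. c j *s row j (mat 1 :: real^'n^'n))"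
  have sp: "c j *s row j (mat 1) \<in> vec.span {row j (mat 1 :: real^'n^'n) |j. j \<noteq> k}" for j
  proof (cases "j = k")
    case True then show ?thesis by (simp add: c_def vec.span_zero)
  next
    case False then show ?thesis by (intro vec.span_scale vec.span_base) blast
  qed
  have "x \<in> vec.span {row j (mat 1 :: real^'n^'n) |j. j \<noteq> k}"
    unfolding x_def by (intro vec.span_neg vec.span_sum sp)
  then have "det (\<chi> r. if r = k then row k (mat 1 :: real^'n^'n) + x else row r (mat 1)) = 1"
    using det_row_span[OF \<open>x \<in> _\<close>] by (simp only: det_I)
  moreover have "(\<chi> r. if r = k then row k (mat 1 :: real^'n^'n) + x else row r (mat 1)) = transpose (elimE B k)"
  proof -
    have xs: "x $ s = - c s" for s
    proof -
      have "x $ s = - (\<Sum>j\<in>UNIV. c j * (row j (mat 1 :: real^'n^'n)) $ s)"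
        unfolding x_def by (simp add: sum_component)
      also have "\<dots> = - (\<Sum>j\<in>UNIV. if j = s then c j else 0)"
        by (intro arg_cong[where f=uminus] sum.cong) (auto simp: row_def mat_def)
      finally show ?thesis by simp
    qed
    show ?thesis
      unfolding vec_eq_iff
    proof (intro allI)
      fix r s
      show "(\<chi> r. if r = k then row k (mat 1 :: real^'n^'n) + x else row r (mat 1)) $ r $ s = transpose (elimE B k) $ r $ s"
        by (simp add: xs transpose_def elimE_def c_def row_def mat_def)
    qed
  qed
  ultimately show ?thesis by simp
qed

lemma if_mult_real: "(if P then a else 0) * (y::real) = (if P then a * y else 0)"
  "(y::real) * (if P then a else 0) = (if P then y * a else 0)"
  by simp_all

lemma elimE_entry:
  fixes B :: "real^'n^'n" and k :: 'n
  defines "c \<equiv> (\<lambda>i. if i = k then 0 else B$i$k / B$k$k)"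
  shows "(elimE B k ** B ** transpose (elimE B k)) $ i $ j
     = B$i$j - c i * B$k$j - c j * B$i$k + c i * c j * B$k$k"
proof -
  have E: "elimE B k $ i $ l = (if i = l then 1 else 0) - (if l = k then c i else 0)" for i l
    unfolding elimE_def c_def by simp
  have 1: "(elimE B k ** B) $ i $ l = B$i$l - c i * B$k$l" for i l
  proof -
    have "(elimE B k ** B) $ i $ l = (\<Sum>m\<in>UNIV. ((if i = m then 1 else 0) - (if m = k then c i else 0)) * B$m$l)"
      by (simp add: matrix_matrix_mult_def E)
    also have "\<dots> = (\<Sum>m\<in>UNIV. (if i = m then B$m$l else 0)) - (\<Sum>m\<in>UNIV. (if m = k then c i * B$m$l else 0))"
      by (simp add: left_diff_distrib sum_subtractf if_mult_real)
    finally show ?thesis by simp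
  qed
  have "(elimE B k ** B ** transpose (elimE B k)) $ i $ j
      = (\<Sum>l\<in>UNIV. (B$i$l - c i * B$k$l) * ((if j = l then 1 else 0) - (if l = k then c j else 0)))"
    by (simp add: matrix_matrix_mult_def[of "elimE B k ** B"] transpose_def E 1)
  also have "\<dots> = (\<Sum>l\<in>UNIV. (if j = l then B$i$l - c i * B$k$l else 0))
      - (\<Sum>l\<in>UNIV. (if l = k then (B$i$l - c i * B$k$l) * c j else 0))"
    by (simp add: right_diff_distrib sum_subtractf if_mult_real)
  finally show ?thesis by (simp add: algebra_simps)
qed

lemma diag_congr_gen:
  fixes A :: "real^'n^'n"
  assumes "pd A" and "finite K"
  shows "\<exists>E. det E = 1 \<and> pd (E ** A ** transpose E)
     \<and> (\<forall>i j. i \<noteq> j \<and> (i \<in> K \<or> j \<in> K) \<longrightarrow> (E ** A ** transpose E)$i$j = 0)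
     \<and> (\<forall>i. (E ** A ** transpose E)$i$i \<le> A$i$i)"
  using assms(2)
proof (induction K rule: finite_induct)
  case empty
  show ?case by (rule exI[of _ "mat 1"]) (simp add: assms(1) transpose_mat)
next
  case (insert k K)
  then obtain E where E: "det E = 1" "pd (E ** A ** transpose E)"
     "\<forall>i j. i \<noteq> j \<and> (i \<in> K \<or> j \<in> K) \<longrightarrow> (E ** A ** transpose E)$i$j = 0"
     "\<forall>i. (E ** A ** transpose E)$i$i \<le> A$i$i" by blast
  define B where "B = E ** A ** transpose E"
  define E' where "E' = elimE B k"
  define c where "c = (\<lambda>i. if i = k then 0 else B$i$k / B$k$k)"
  have pdB: "pd B" using E(2) B_def by simp
  have Bkk: "0 < B$k$k" using pd_diag_pos[OF pdB] .
  have Bsym: "B$i$j = B$j$i" for i j using pdB unfolding pd_def by (simp add: sym_entry)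
  have eq: "E' ** B ** transpose E' = (E' ** E) ** A ** transpose (E' ** E)"
    by (simp add: B_def matrix_transpose_mul matrix_mul_assoc)
  have ent: "(E' ** B ** transpose E') $ i $ j
     = B$i$j - c i * B$k$j - c j * B$i$k + c i * c j * B$k$k" for i j
    unfolding E'_def c_def by (rule elimE_entry)
  have det1: "det (E' ** E) = 1" by (simp add: det_mul E(1) E'_def elimE_det)
  have pd1: "pd (E' ** B ** transpose E')"
    using pd_congr[OF pdB, of E'] by (simp add: E'_def elimE_det)
  have zeros: "(E' ** B ** transpose E') $ i $ j = 0"
    if ij: "i \<noteq> j" and mem: "i \<in> insert k K \<or> j \<in> insert k K" for i j
  proof -
    consider "i = k" | "j = k" | "i \<in> K" "i \<noteq> k" | "j \<in> K" "j \<noteq> k"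
      using mem insert.hyps by auto
    then show ?thesis
    proof cases
      case 1 then show ?thesis using ij Bkk by (simp add: ent c_def Bsym[of j k])
    next
      case 2 then show ?thesis using ij Bkk by (simp add: ent c_def)
    next
      case 3
      have "B$i$j = 0" "B$i$k = 0" using E(3) 3 ij by (auto simp: B_def)
      then show ?thesis using 3 by (simp add: ent c_def Bsym[of k i])
    next
      case 4
      have "B$i$j = 0" "B$j$k = 0" using E(3) 4 ij by (auto simp: B_def)
      then show ?thesis using 4 by (simp add: ent c_def Bsym[of k j])
    qed
  qed
  have diag: "(E' ** B ** transpose E') $ i $ i \<le> A$i$i" for i
  proof (cases "i = k")
    case True
    have "(E' ** B ** transpose E') $ i $ i = B$i$i" using True by (simp add: ent c_def)
    then show ?thesis using E(4) B_def by metis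
  next
    case False
    have "(E' ** B ** transpose E') $ i $ i = B$i$i - (B$i$k)^2 / B$k$k"
      using False Bkk by (simp add: ent c_def Bsym[of k i] power2_eq_square field_simps)
    also have "\<dots> \<le> B$i$i" using Bkk by simp
    finally show ?thesis using E(4) B_def by (metis order_trans)
  qed
  show ?case
    by (rule exI[of _ "E' ** E"]) (use det1 pd1 zeros diag eq in simp)
qed

lemma diag_congr:
  fixes A :: "real^'n^'n"
  assumes "pd A"
  shows "\<exists>E. det E = 1 \<and> pd (E ** A ** transpose E)
     \<and> (\<forall>i j. i \<noteq> j \<longrightarrow> (E ** A ** transpose E)$i$j = 0)
     \<and> (\<forall>i. (E ** A ** transpose E)$i$i \<le> A$i$i)"
  using diag_congr_gen[OF assms, of UNIV] by auto

lemma det_congr1: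
  fixes A E :: "real^'n^'n"
  assumes "det E = 1"
  shows "det (E ** A ** transpose E) = det A"
  using assms by (simp add: det_mul)

lemma pd_hadamard:
  fixes A :: "real^'n^'n"
  assumes "pd A"
  shows "0 < det A \<and> ln (det A) \<le> (\<Sum>i\<in>UNIV. ln (A$i$i))"
proof -
  obtain E where E: "det E = 1" "pd (E ** A ** transpose E)"
     "\<forall>i j. i \<noteq> j \<longrightarrow> (E ** A ** transpose E)$i$j = 0"
     "\<forall>i. (E ** A ** transpose E)$i$i \<le> A$i$i"
    using diag_congr[OF assms] by blast
  define D where "D = E ** A ** transpose E"
  have pos: "0 < D$i$i" for i using pd_diag_pos E(2) D_def by blast
  have "det A = det D" using det_congr1[OF E(1)] D_def by simp
  also have "\<dots> = (\<Prod>i\<in>UNIV. D$i$i)" using E(3) D_def by (intro det_diagonal) auto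
  finally have dA: "det A = (\<Prod>i\<in>UNIV. D$i$i)" .
  have "0 < det A" unfolding dA using pos by (simp add: prod_pos)
  moreover have "ln (det A) = (\<Sum>i\<in>UNIV. ln (D$i$i))"
    unfolding dA using pos by (subst ln_prod) (auto simp: less_imp_neq[symmetric])
  moreover have "(\<Sum>i\<in>UNIV. ln (D$i$i)) \<le> (\<Sum>i\<in>UNIV. ln (A$i$i))"
  proof (intro sum_mono)
    fix i :: 'n
    have "D$i$i \<le> A$i$i" using E(4) D_def by simp
    then show "ln (D$i$i) \<le> ln (A$i$i)" using pos[of i] by simp
  qed
  ultimately show ?thesis by simp
qed

lemma mtrace_trace: "mtrace A = trace A"
  by (simp add: mtrace_def trace_def)

lemma key_ineq:
  fixes S S0 :: "real^'n^'n"
  assumes pS: "pd S" and pS0: "pd S0"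
  shows "ln (det S0) + real CARD('n) \<le> ln (det S) + mtrace (matrix_inv S ** S0)"
proof -
  obtain E where E: "det E = 1" "pd (E ** S ** transpose E)"
     "\<forall>i j. i \<noteq> j \<longrightarrow> (E ** S ** transpose E)$i$j = 0"
    using diag_congr[OF pS] by blast
  define D where "D = E ** S ** transpose E"
  define d where "d i = D$i$i" for i
  have dpos: "0 < d i" for i unfolding d_def D_def using pd_diag_pos[OF E(2)] .
  have detS: "det S = (\<Prod>i\<in>UNIV. d i)"
    using det_congr1[OF E(1), of S] E(3) D_def d_def by (simp add: det_diagonal)
  define Dinv :: "real^'n^'n" where "Dinv = (\<chi> i j. if i = j then 1 / d i else 0)"
  have DinvD: "Dinv ** D = mat 1"
  proof -
    have "(Dinv ** D) $ i $ j = mat 1 $ i $ j" for i j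
    proof -
      have "(Dinv ** D) $ i $ j = D$i$j / d i"
        unfolding Dinv_def by (simp add: matrix_matrix_mult_def if_mult_real)
      then show ?thesis using E(3) dpos[of i] unfolding D_def[symmetric] d_def
        by (auto simp: mat_def)
    qed
    then show ?thesis by (simp add: vec_eq_iff)
  qed
  have Einv: "invertible (transpose E)" using E(1) by (simp add: invertible_det_nz)
  define F where "F = matrix_inv (transpose E)"
  have F: "transpose E ** F = mat 1" "F ** transpose E = mat 1"
    using minv_props[OF Einv] F_def by auto
  have ES: "E ** S = D ** F"
  proof -
    have "E ** S = E ** S ** (transpose E ** F)" using F by simp
    also have "\<dots> = D ** F" by (simp add: D_def matrix_mul_assoc)
    finally show ?thesis .
  qed
  have "(transpose E ** Dinv ** E) ** S = mat 1"
  proof -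
    have "(transpose E ** Dinv ** E) ** S = transpose E ** Dinv ** (E ** S)"
      by (simp add: matrix_mul_assoc)
    also have "\<dots> = transpose E ** (Dinv ** D) ** F" by (simp add: ES matrix_mul_assoc)
    also have "\<dots> = mat 1" by (simp add: DinvD F)
    finally show ?thesis .
  qed
  then have Sinv: "matrix_inv S = transpose E ** Dinv ** E" by (rule minv_unique)
  define C where "C = E ** S0 ** transpose E"
  have pC: "pd C" unfolding C_def using pd_congr[OF pS0] E(1) by simp
  have detC: "det C = det S0" unfolding C_def by (rule det_congr1[OF E(1)])
  have Cpos: "0 < C$i$i" for i using pd_diag_pos[OF pC] .
  have tr: "mtrace (matrix_inv S ** S0) = (\<Sum>i\<in>UNIV. C$i$i / d i)"
  proof -
    have "mtrace (matrix_inv S ** S0) = trace (transpose E ** (Dinv ** E ** S0))"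
      by (simp add: Sinv mtrace_trace matrix_mul_assoc)
    also have "\<dots> = trace ((Dinv ** E ** S0) ** transpose E)" by (rule trace_mul_sym)
    also have "\<dots> = trace (Dinv ** C)" by (simp add: C_def matrix_mul_assoc)
    also have "\<dots> = (\<Sum>i\<in>UNIV. C$i$i / d i)"
      unfolding trace_def Dinv_def by (simp add: matrix_matrix_mult_def if_mult_real)
    finally show ?thesis .
  qed
  have lnS: "ln (det S) = (\<Sum>i\<in>UNIV. ln (d i))"
    unfolding detS using dpos by (subst ln_prod) (auto simp: less_imp_neq[symmetric])
  have "ln (det S0) \<le> (\<Sum>i\<in>UNIV. ln (C$i$i))" using pd_hadamard[OF pC] detC by simp
  moreover have "(\<Sum>i\<in>UNIV. ln (C$i$i) + 1) \<le> (\<Sum>i\<in>UNIV. ln (d i) + C$i$i / d i)"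
  proof (intro sum_mono)
    fix i :: 'n
    have "ln (C$i$i / d i) \<le> C$i$i / d i - 1" using Cpos dpos by (intro ln_le_minus_one) simp
    then show "ln (C$i$i) + 1 \<le> ln (d i) + C$i$i / d i"
      using Cpos[of i] dpos[of i] by (simp add: ln_div)
  qed
  ultimately show ?thesis unfolding tr lnS by (simp add: sum.distrib)
qed



lemma quad_sum:
  fixes A :: "real^'n^'n"
  shows "x \<bullet> (A *v x) = (\<Sum>i\<in>UNIV. \<Sum>j\<in>UNIV. x$i * A$i$j * x$j)"
  unfolding inner_vec_def matrix_vector_mult_def
  by (auto simp: sum_distrib_left ac_simps intro!: sum.cong)

lemma quad_bound:
  fixes D :: "real^'n^'n"
  assumes "\<forall>i j. \<bar>D$i$j\<bar> \<le> e"
  shows "\<bar>x \<bullet> (D *v x)\<bar> \<le> real CARD('n) ^ 2 * e * (norm x)^2"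
proof -
  have e0: "0 \<le> e" using assms by (meson abs_ge_zero order_trans)
  have "\<bar>x \<bullet> (D *v x)\<bar> \<le> (\<Sum>i\<in>UNIV. \<Sum>j\<in>UNIV. \<bar>x$i * D$i$j * x$j\<bar>)"
    unfolding quad_sum by (rule order_trans[OF sum_abs sum_mono]) (rule sum_abs)
  also have "\<dots> \<le> (\<Sum>i\<in>(UNIV::'n set). \<Sum>j\<in>(UNIV::'n set). norm x * e * norm x)"
  proof -
    have t: "\<bar>x$i * D$i$j * x$j\<bar> \<le> norm x * e * norm x" for i j
    proof -
    have "\<bar>x$i * D$i$j * x$j\<bar> = \<bar>x$i\<bar> * \<bar>D$i$j\<bar> * \<bar>x$j\<bar>" by (simp add: abs_mult)
    also have "\<dots> \<le> norm x * e * norm x"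
      using assms component_le_norm_cart[of x i] component_le_norm_cart[of x j] e0
      by (intro mult_mono) auto
    finally show ?thesis .
    qed
    show ?thesis by (rule sum_mono, rule sum_mono, rule t)
  qed
  also have "\<dots> = real CARD('n) ^ 2 * e * (norm x)^2" by (simp add: power2_eq_square)
  finally show ?thesis .
qed

lemma pd_lower:
  fixes S0 :: "real^'n^'n"
  assumes "pd S0"
  shows "\<exists>c>0. \<forall>x. c * (norm x)^2 \<le> x \<bullet> (S0 *v x)"
proof -
  let ?f = "\<lambda>x::real^'n. x \<bullet> (S0 *v x)"
  have cont: "continuous_on (sphere 0 1) ?f"
    by (intro continuous_intros linear_continuous_on matrix_vector_mul_linear)
  have ne: "sphere (0::real^'n) 1 \<noteq> {}"
  proof -
    have "axis (undefined :: 'n) (1::real) \<in> sphere 0 1" by simp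
    then show ?thesis by blast
  qed
  obtain u where u: "u \<in> sphere 0 1" "\<forall>y\<in>sphere 0 1. ?f u \<le> ?f y"
    using continuous_attains_inf[OF compact_sphere ne cont] by blast
  have "u \<noteq> 0" using u(1) by auto
  then have cpos: "0 < ?f u" using assms unfolding pd_def by auto
  have "?f u * (norm x)^2 \<le> ?f x" for x
  proof (cases "x = 0")
    case True then show ?thesis by simp
  next
    case False
    define v where "v = (1 / norm x) *\<^sub>R x"
    have v: "v \<in> sphere 0 1" using False by (simp add: v_def)
    have xv: "x = norm x *\<^sub>R v" using False by (simp add: v_def)
    have "?f x = (norm x)^2 * ?f v"
      by (subst (1 2) xv) (simp add: matrix_vector_mult_scaleR power2_eq_square)
    moreover have "?f u \<le> ?f v" using u(2) v by blast
    ultimately show ?thesis by (metis mult.commute mult_right_mono zero_le_power2)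
  qed
  then show ?thesis using cpos by blast
qed

lemma pd_open:
  fixes S0 :: "real^'n^'n"
  assumes "pd S0"
  shows "\<exists>e>0. \<forall>M. sym_mat M \<and> (\<forall>i j. \<bar>M$i$j - S0$i$j\<bar> < e) \<longrightarrow> pd M"
proof -
  obtain c where c: "c > 0" "\<forall>x. c * (norm x)^2 \<le> x \<bullet> (S0 *v x)"
    using pd_lower[OF assms] by blast
  define e where "e = c / (2 * real CARD('n) ^ 2)"
  have epos: "e > 0" using c(1) by (simp add: e_def)
  have ce: "real CARD('n) ^ 2 * e = c / 2" by (simp add: e_def)
  show ?thesis
  proof (intro exI conjI allI impI)
    show "e > 0" by (rule epos)
    fix M :: "real^'n^'n"
    assume M: "sym_mat M \<and> (\<forall>i j. \<bar>M$i$j - S0$i$j\<bar> < e)"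
    have "\<forall>i j. \<bar>(M - S0)$i$j\<bar> \<le> e" using M by (auto simp: less_imp_le)
    note qb = quad_bound[OF this]
    show "pd M" unfolding pd_def
    proof (intro conjI allI impI)
      show "sym_mat M" using M by simp
      fix x :: "real^'n" assume "x \<noteq> 0"
      have "x \<bullet> (M *v x) = x \<bullet> (S0 *v x) + x \<bullet> ((M - S0) *v x)"
        by (simp add: matrix_vector_mult_diff_rdistrib inner_diff_right)
      moreover have "c * (norm x)^2 \<le> x \<bullet> (S0 *v x)" using c(2) by blast
      moreover have "\<bar>x \<bullet> ((M - S0) *v x)\<bar> \<le> c / 2 * (norm x)^2" using qb[of x] ce by simp
      moreover have "0 < c / 2 * (norm x)^2" using c(1) \<open>x \<noteq> 0\<close> by simp
      ultimately show "0 < x \<bullet> (M *v x)" by linarith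
    qed
  qed
qed



definition cinv :: "real^'n^'n \<Rightarrow> real^'n^'n" where
  "cinv M = (\<chi> k j. det (\<chi> p q. if q = k then (if p = j then 1 else 0) else M$p$q) / det M)"

lemma cinv_eq:
  fixes M :: "real^'n^'n"
  assumes "det M \<noteq> 0"
  shows "matrix_inv M = cinv M"
proof -
  have inv: "invertible M" using assms by (simp add: invertible_det_nz)
  have "matrix_inv M $ k $ j = cinv M $ k $ j" for k j
  proof -
    define y where "y = matrix_inv M *v axis j 1"
    have "M *v y = axis j 1"
      using minv_props[OF inv] by (simp add: y_def matrix_vector_mul_assoc)
    then have "y = (\<chi> k. det(\<chi> i j'. if j' = k then (axis j 1 :: real^'n)$i else M$i$j') / det M)"
      using cramer[OF assms] by blast
    moreover have "y $ k = matrix_inv M $ k $ j"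
      by (simp add: y_def matrix_vector_mult_def axis_def if_distrib if_distribR cong: if_cong)
    moreover have "(\<chi> i j'. if j' = k then (axis j 1 :: real^'n)$i else M$i$j')
        = (\<chi> p q. if q = k then (if p = j then 1 else 0) else M$p$q)"
      by (simp add: vec_eq_iff axis_def)
    ultimately show ?thesis by (simp add: cinv_def)
  qed
  then show ?thesis by (simp add: vec_eq_iff)
qed

definition mdiff :: "('a::real_normed_vector \<Rightarrow> real^'n^'m) \<Rightarrow> 'a \<Rightarrow> bool" where
  "mdiff M x \<longleftrightarrow> (\<forall>i j. (\<lambda>y. M y $ i $ j) differentiable (at x))"

lemma diff_prod:
  fixes f :: "'i \<Rightarrow> 'a::real_normed_vector \<Rightarrow> real"
  assumes "\<And>i. i \<in> I \<Longrightarrow> f i differentiable (at x)"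
  shows "(\<lambda>y. \<Prod>i\<in>I. f i y) differentiable (at x)"
proof -
  obtain D where "\<And>i. i \<in> I \<Longrightarrow> (f i has_derivative D i) (at x)"
    using assms unfolding differentiable_def by metis
  then show ?thesis unfolding differentiable_def by (blast intro: has_derivative_prod)
qed

lemma diff_det:
  fixes M :: "'a::real_normed_vector \<Rightarrow> real^'n^'n"
  assumes "mdiff M x"
  shows "(\<lambda>y. det (M y)) differentiable (at x)"
  unfolding det_def
  using assms unfolding mdiff_def
  by (intro differentiable_sum finite_permutations finite_UNIV ballI differentiable_mult
      differentiable_const diff_prod) auto

lemma mdiff_const: "mdiff (\<lambda>y. A) x"
  by (simp add: mdiff_def)

lemma mdiff_add: "mdiff M x \<Longrightarrow> mdiff N x \<Longrightarrow> mdiff (\<lambda>y. M y + N y) x"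
  by (simp add: mdiff_def)

lemma mdiff_scaleR: "mdiff M x \<Longrightarrow> mdiff (\<lambda>y. c *\<^sub>R M y) x"
  by (simp add: mdiff_def)

lemma mdiff_mult:
  fixes M :: "'a::real_normed_vector \<Rightarrow> real^'n^'m" and N :: "'a \<Rightarrow> real^'k^'n"
  shows "mdiff M x \<Longrightarrow> mdiff N x \<Longrightarrow> mdiff (\<lambda>y. M y ** N y) x"
  unfolding mdiff_def matrix_matrix_mult_def
  by (auto intro!: differentiable_sum differentiable_mult)

lemma diff_if_const: "f differentiable F \<Longrightarrow> (\<lambda>y. if P then c else f y) differentiable F"
  by (cases P) auto

lemma mdiff_cinv:
  fixes M :: "'a::real_normed_vector \<Rightarrow> real^'n^'n"
  assumes "mdiff M x" "det (M x) \<noteq> 0"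
  shows "mdiff (\<lambda>y. cinv (M y)) x"
  unfolding mdiff_def cinv_def
proof (intro allI)
  fix k j
  have "mdiff (\<lambda>y. (\<chi> p q. if q = k then (if p = j then 1 else 0) else M y $p$q) :: real^'n^'n) x"
    using assms(1) unfolding mdiff_def
    by (auto intro!: diff_if_const simp del: if_image_distrib cong del: if_weak_cong)
  then show "(\<lambda>y. (\<chi> k j. det (\<chi> p q. if q = k then (if p = j then 1 else 0) else M y$p$q) / det (M y)) $ k $ j)
      differentiable (at x)"
    using assms by (simp add: diff_det differentiable_divide)
qed

lemma invmat_entry:
  "invmat a c b $ i $ j = (\<Sum>l\<in>UNIV. b $ l * (a l $ i * a l $ j / (2 * c l)))"
  unfolding invmat_def outer_def
  by (simp add: sum_component sum_distrib_left)

lemma mdiff_invmat: "mdiff (\<lambda>b. invmat a c b) x"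
  unfolding mdiff_def invmat_entry
  by (intro allI differentiable_sum finite_UNIV ballI differentiable_mult differentiable_const
      bounded_linear_imp_differentiable bounded_linear_vec_nth) auto



lemma ev_ne:
  fixes f :: "'a::real_normed_vector \<Rightarrow> real"
  assumes "f differentiable (at x)" "f x \<noteq> 0"
  shows "eventually (\<lambda>y. f y \<noteq> 0) (at x)"
proof -
  have "continuous (at x) f" using differentiable_imp_continuous_within[OF assms(1)] by simp
  then have "(f \<longlongrightarrow> f x) (at x)" by (simp add: continuous_at)
  then show ?thesis using assms(2) by (rule tendsto_imp_eventually_ne)
qed

lemma ev_close:
  fixes f :: "'a::real_normed_vector \<Rightarrow> real"
  assumes "f differentiable (at x)" "0 < e"
  shows "eventually (\<lambda>y. \<bar>f y - f x\<bar> < e) (at x)"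
proof -
  have "continuous (at x) f" using differentiable_imp_continuous_within[OF assms(1)] by simp
  then have "(f \<longlongrightarrow> f x) (at x)" by (simp add: continuous_at)
  from tendstoD[OF this assms(2)] show ?thesis by (simp add: dist_real_def)
qed

lemma transpose_add': "transpose (A + B) = transpose A + transpose (B :: real^'n^'m)"
  by (simp add: transpose_def vec_eq_iff)

lemma sym_minv:
  fixes M :: "real^'n^'n"
  assumes "sym_mat M" "invertible M"
  shows "sym_mat (matrix_inv M)"
proof -
  have "transpose (matrix_inv M) ** M = mat 1"
    using minv_props[OF assms(2)] assms(1)
    by (metis matrix_transpose_mul sym_mat_def transpose_mat)
  then have "matrix_inv M = transpose (matrix_inv M)" by (rule minv_unique)
  then show ?thesis by (simp add: sym_mat_def)
qed

lemma sym_invmat: "sym_mat (invmat a c b)"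
  unfolding sym_mat_def by (simp add: vec_eq_iff transpose_def invmat_entry mult.commute)

lemma sym_Sigma:
  assumes "sym_mat Sp" "sym_mat Sq" "invertible (invmat a r b)" "invertible (invmat a x b)"
  shows "sym_mat (Sigma_b a r x Sp Sq Spq sn2 b)"
proof -
  define R where "R = matrix_inv (invmat a r b)"
  define X where "X = matrix_inv (invmat a x b)"
  have R: "transpose R = R" using sym_minv[OF sym_invmat assms(3)] R_def by (simp add: sym_mat_def)
  have X: "transpose X = X" using sym_minv[OF sym_invmat assms(4)] X_def by (simp add: sym_mat_def)
  have P: "transpose Sp = Sp" "transpose Sq = Sq" using assms(1,2) by (simp_all add: sym_mat_def)
  show ?thesis
    unfolding sym_mat_def Sigma_b_def Let_def R_def[symmetric] X_def[symmetric]
    by (simp add: transpose_add' transpose_scalar matrix_transpose_mul R X P matrix_mul_assoc add_ac)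
qed



theorem lemma2:
  fixes a :: "'e::finite \<Rightarrow> real^'n"
    and r x :: "'e \<Rightarrow> real"
    and Sp Sq Spq Shat :: "real^'n^'n"
    and sn2 :: real
    and L :: nat
    and bo :: "real^'e"
  assumes r_pos: "\<forall>l. 0 < r l"
    and x_pos: "\<forall>l. 0 < x l"
    and L_pos: "1 \<le> L"
    and sn2_nonneg: "0 \<le> sn2"
    and cov: "psd (block2 Sp Spq (transpose Spq) Sq)"
    and bo_bin: "\<forall>l. bo $ l \<in> {0, 1}"
    and bo_sum: "(\<Sum>l\<in>UNIV. bo $ l) = real L"
    and bo_def: "f_defined a r x Sp Sq Spq sn2 bo"
    and Shat: "Shat = Sigma_b a r x Sp Sq Spq sn2 bo"
  shows "(fobj a r x Sp Sq Spq sn2 Shat has_derivative (\<lambda>h. 0)) (at bo)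
    \<and> (\<forall>b. (\<forall>l. b $ l \<in> {0, 1}) \<and> (\<Sum>l\<in>UNIV. b $ l) = real L
            \<and> f_defined a r x Sp Sq Spq sn2 b
            \<longrightarrow> fobj a r x Sp Sq Spq sn2 Shat bo \<le> fobj a r x Sp Sq Spq sn2 Shat b)
    \<and> (\<forall>b. (\<forall>l. b $ l \<in> {0..1}) \<and> (\<Sum>l\<in>UNIV. b $ l) = real L
            \<and> f_defined a r x Sp Sq Spq sn2 b
            \<longrightarrow> fobj a r x Sp Sq Spq sn2 Shat bo \<le> fobj a r x Sp Sq Spq sn2 Shat b)"
proof -
  let ?S = "Sigma_b a r x Sp Sq Spq sn2"
  let ?f = "fobj a r x Sp Sq Spq sn2 Shat"
  have pS0: "pd Shat" using bo_def Shat by (simp add: f_defined_def)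
  have invS0: "invertible Shat" using pd_det_nz[OF pS0] by (simp add: invertible_det_nz)
  have fbo: "?f bo = ln (det Shat) + real CARD('n)"
    using minv_props[OF invS0] by (simp add: fobj_def Let_def Shat[symmetric] mtrace_trace trace_I)
  have ge: "?f bo \<le> ?f b" if "pd (?S b)" for b
    using key_ineq[OF that pS0] fbo by (simp add: fobj_def Let_def)
  have part23: "\<forall>b. P b \<and> f_defined a r x Sp Sq Spq sn2 b \<longrightarrow> ?f bo \<le> ?f b" for P
    using ge by (simp add: f_defined_def)
  have symB: "sym_mat (block2 Sp Spq (transpose Spq) Sq)" using cov by (simp add: psd_def)
  have symSp: "sym_mat Sp"
    unfolding sym_mat_def
    using sym_entry[OF symB, of "Inl _" "Inl _"] by (simp add: vec_eq_iff transpose_def block2_def)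
  have symSq: "sym_mat Sq"
    unfolding sym_mat_def
    using sym_entry[OF symB, of "Inr _" "Inr _"] by (simp add: vec_eq_iff transpose_def block2_def)
  \<comment> \<open>smooth surrogate\<close>
  define S' where "S' b = (let R = cinv (invmat a r b); X = cinv (invmat a x b) in
       R ** Sp ** R + X ** Sq ** X + R ** Spq ** X + X ** transpose Spq ** R + sn2 *\<^sub>R mat 1)" for b
  define G where "G b = ln (det (S' b)) + mtrace (cinv (S' b) ** Shat)" for b
  have dr: "det (invmat a r bo) \<noteq> 0" and dx: "det (invmat a x bo) \<noteq> 0"
    using bo_def by (simp_all add: f_defined_def invertible_det_nz)
  have SS': "?S b = S' b" if "det (invmat a r b) \<noteq> 0" "det (invmat a x b) \<noteq> 0" for b
    using that by (simp add: Sigma_b_def S'_def cinv_eq)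
  have S'bo: "S' bo = Shat" using SS'[OF dr dx] Shat by simp
  have dS0: "det (S' bo) \<noteq> 0" using S'bo pd_det_nz[OF pS0] by simp
  have dS0pos: "0 < det (S' bo)" using S'bo pd_hadamard[OF pS0] by simp
  have mS': "mdiff S' bo"
    unfolding S'_def Let_def
    by (intro mdiff_add mdiff_mult mdiff_const mdiff_cinv mdiff_invmat mdiff_scaleR dr dx)
  have ddet: "(\<lambda>b. det (S' b)) differentiable (at bo)" by (rule diff_det[OF mS'])
  have lnd: "ln differentiable (at (det (S' bo)))"
    using DERIV_ln[OF dS0pos] by (auto intro: differentiableI has_field_derivative_imp_has_derivative)
  have "mdiff (\<lambda>b. cinv (S' b) ** Shat) bo"
    by (intro mdiff_mult mdiff_cinv mS' dS0 mdiff_const)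
  then have dtr: "(\<lambda>b. mtrace (cinv (S' b) ** Shat)) differentiable (at bo)"
    unfolding mtrace_def mdiff_def by (intro differentiable_sum) auto
  have Gd: "G differentiable (at bo)"
    unfolding G_def
    by (intro differentiable_add dtr differentiable_compose[where f=ln, OF lnd ddet])
  then obtain D where GD: "(G has_derivative D) (at bo)" unfolding differentiable_def by blast
  have ev1: "eventually (\<lambda>b. det (invmat a r b) \<noteq> 0) (at bo)"
    by (rule ev_ne[OF diff_det[OF mdiff_invmat] dr])
  have ev2: "eventually (\<lambda>b. det (invmat a x b) \<noteq> 0) (at bo)"
    by (rule ev_ne[OF diff_det[OF mdiff_invmat] dx])
  have ev3: "eventually (\<lambda>b. det (S' b) \<noteq> 0) (at bo)"
    by (rule ev_ne[OF ddet dS0])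
  obtain e where e: "e > 0" "\<forall>M. sym_mat M \<and> (\<forall>i j. \<bar>M$i$j - Shat$i$j\<bar> < e) \<longrightarrow> pd M"
    using pd_open[OF pS0] by blast
  have ev4: "eventually (\<lambda>b. \<forall>i j. \<bar>S' b$i$j - Shat$i$j\<bar> < e) (at bo)"
  proof (intro eventually_all_finite)
    fix i j
    have "(\<lambda>b. S' b $ i $ j) differentiable (at bo)" using mS' by (simp add: mdiff_def)
    from ev_close[OF this e(1)] show "eventually (\<lambda>b. \<bar>S' b$i$j - Shat$i$j\<bar> < e) (at bo)"
      by (simp add: S'bo)
  qed
  have evfG: "eventually (\<lambda>b. G b = ?f b) (at bo)"
    using ev1 ev2 ev3
  proof eventually_elim
    case (elim b)
    then show ?case
      by (simp add: G_def fobj_def Let_def SS' cinv_eq)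
  qed
  have evmin: "eventually (\<lambda>b. ?f bo \<le> ?f b) (at bo)"
    using ev1 ev2 ev4
  proof eventually_elim
    case (elim b)
    have "sym_mat (?S b)"
      using elim by (intro sym_Sigma symSp symSq) (simp_all add: invertible_det_nz)
    then have "pd (?S b)" using e(2) elim SS'[of b] by simp
    then show ?case by (rule ge)
  qed
  have Gbo: "G bo = ?f bo"
    using cinv_eq[OF dS0] by (simp add: G_def fobj_def Let_def SS'[OF dr dx] S'bo[symmetric])
  have fD: "(?f has_derivative D) (at bo)"
    using has_derivative_transform_eventually[of G D bo UNIV ?f] GD evfG Gbo by simp
  have "D = (\<lambda>h. 0)" by (rule has_derivative_local_min[OF fD evmin])
  with fD part23 show ?thesis by simp
qed


end
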